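(* Let $n_i\le r_i$ ($i=1,2$) be nonnegative integers and let $(X_{1,1},\dots,X_{1,n_1},X_{2,1},\dots,X_{2,n_2})$ be $\{0,1\}$-valued and $(n_1,n_2)$-DFPE, with associated point $w=(w_{l_1,l_2})_{(l_1,l_2)\ne(0,0),\,0\le l_i\le n_i}$. Then the sequence is $(r_1,r_2)$-extendible if and only if $w\in\operatorname{conv}\{\lambda^{(n_1,n_2)}_{k_1,k_2;\,r_1,r_2}:0\le k_1\le r_1,\ 0\le k_2\le r_2\}$.
   Context: A family $(X_{1,1},\dots,X_{1,n_1},X_{2,1},\dots,X_{2,n_2})$ of random variables is $(n_1,n_2)$-DFPE (partially exchangeable in the sense of de Finetti) if its joint law is invariant under any permutation of the indices $1,\dots,n_1$ of the first group together with any permutation of the indices $1,\dots,n_2$ of the second group. For such a $\{0,1\}$-valued family set $w_{l_1,l_2}=P(X_{1,1}=\dots=X_{1,l_1}=1,\ X_{2,1}=\dots=X_{2,l_2}=1)$ for $0\le l_i\le n_i$. The family is $(r_1,r_2)$-extendible ($r_i\ge n_i$) if there is an $(r_1,r_2)$-DFPE $\{0,1\}$-valued family $(Y_{1,1},\dots,Y_{1,r_1},Y_{2,1},\dots,Y_{2,r_2})$ such that $(Y_{1,1},\dots,Y_{1,n_1},Y_{2,1},\dots,Y_{2,n_2})$ has the same law as the original family. For integers $m$ and $k\ge0$, $(m)_k=m(m-1)\cdots(m-k+1)$, $(m)_0=1$. For $0\le k_i\le r_i$, $\lambda^{(n_1,n_2)}_{k_1,k_2;\,r_1,r_2}$ is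 the point with the same coordinate indexing as $w$ whose $(l_1,l_2)$-coordinate is $\dfrac{(k_1)_{l_1}(k_2)_{l_2}}{(r_1)_{l_1}(r_2)_{l_2}}$. *)

theory Defs
  imports "HOL-Analysis.Analysis" "HOL-Probability.Probability" "HOL-Library.Function_Algebras"
begin

(* Pointwise real vector space structure on functions, so that points
   indexed by (l1,l2) can be treated as elements of a real vector space
   and the library's  convex hull  applies. *)
instantiation "fun" :: (type, real_vector) real_vector
begin
definition scaleR_fun :: "real \<Rightarrow> ('a \<Rightarrow> 'b) \<Rightarrow> 'a \<Rightarrow> 'b"
  where "scaleR_fun r f = (\<lambda>x. r *\<^sub>R f x)"
instance
  by standard (auto simp: scaleR_fun_def fun_eq_iff scaleR_add_right scaleR_add_left)
end

(* A joint configuration of a {0,1}-valued family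
   (X_{1,1},...,X_{1,n1},X_{2,1},...,X_{2,n2}) is a pair (a,b) of
   functions nat => bool, a j = value of X_{1,j+1}, b j = value of X_{2,j+1}
   (0-based indices); coordinates beyond n1 resp. n2 are fixed to False. *)
definition configs :: "nat \<Rightarrow> nat \<Rightarrow> ((nat \<Rightarrow> bool) \<times> (nat \<Rightarrow> bool)) set" where
  "configs n1 n2 = {(a, b). (\<forall>j\<ge>n1. \<not> a j) \<and> (\<forall>j\<ge>n2. \<not> b j)}"

definition DFPE :: "nat \<Rightarrow> nat \<Rightarrow> ((nat \<Rightarrow> bool) \<times> (nat \<Rightarrow> bool)) pmf \<Rightarrow> bool" where
  "DFPE n1 n2 p \<longleftrightarrow> set_pmf p \<subseteq> configs n1 n2 \<and>
     (\<forall>\<sigma>1 \<sigma>2. \<sigma>1 permutes {..<n1} \<longrightarrow> \<sigma>2 permutes {..<n2} \<longrightarrow>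
        map_pmf (\<lambda>(a, b). (a \<circ> \<sigma>1, b \<circ> \<sigma>2)) p = p)"

definition wcoord :: "((nat \<Rightarrow> bool) \<times> (nat \<Rightarrow> bool)) pmf \<Rightarrow> nat \<Rightarrow> nat \<Rightarrow> real" where
  "wcoord p l1 l2 = measure_pmf.prob p {(a, b). (\<forall>j<l1. a j) \<and> (\<forall>j<l2. b j)}"

definition idx :: "nat \<Rightarrow> nat \<Rightarrow> (nat \<times> nat) set" where
  "idx n1 n2 = {(l1, l2). l1 \<le> n1 \<and> l2 \<le> n2 \<and> (l1, l2) \<noteq> (0, 0)}"

definition wpoint :: "nat \<Rightarrow> nat \<Rightarrow> ((nat \<Rightarrow> bool) \<times> (nat \<Rightarrow> bool)) pmf \<Rightarrow> (nat \<times> nat \<Rightarrow> real)" where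
  "wpoint n1 n2 p = (\<lambda>(l1, l2). if (l1, l2) \<in> idx n1 n2 then wcoord p l1 l2 else 0)"

definition ffac :: "int \<Rightarrow> nat \<Rightarrow> real" where
  "ffac m k = (\<Prod>i<k. real_of_int (m - int i))"

definition lambdapt :: "nat \<Rightarrow> nat \<Rightarrow> nat \<Rightarrow> nat \<Rightarrow> nat \<Rightarrow> nat \<Rightarrow> (nat \<times> nat \<Rightarrow> real)" where
  "lambdapt n1 n2 k1 k2 r1 r2 = (\<lambda>(l1, l2). if (l1, l2) \<in> idx n1 n2 then
      (ffac (int k1) l1 * ffac (int k2) l2) / (ffac (int r1) l1 * ffac (int r2) l2) else 0)"

definition restr :: "nat \<Rightarrow> nat \<Rightarrow> (nat \<Rightarrow> bool) \<times> (nat \<Rightarrow> bool) \<Rightarrow> (nat \<Rightarrow> bool) \<times> (nat \<Rightarrow> bool)" where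
  "restr n1 n2 = (\<lambda>(a, b). (\<lambda>j. j < n1 \<and> a j, \<lambda>j. j < n2 \<and> b j))"

definition extendible :: "nat \<Rightarrow> nat \<Rightarrow> nat \<Rightarrow> nat \<Rightarrow> ((nat \<Rightarrow> bool) \<times> (nat \<Rightarrow> bool)) pmf \<Rightarrow> bool" where
  "extendible n1 n2 r1 r2 p \<longleftrightarrow>
     (\<exists>q. DFPE r1 r2 q \<and> map_pmf (restr n1 n2) q = p)"

end

theory Submission
  imports Defs
begin

definition cfg :: "nat set \<Rightarrow> nat set \<Rightarrow> (nat\<Rightarrow>bool)\<times>(nat\<Rightarrow>bool)" where
  "cfg A B = ((\<lambda>j. j\<in>A), (\<lambda>j. j\<in>B))"
definition C1 :: "nat \<Rightarrow> nat \<Rightarrow> nat set set" where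
  "C1 r k = {A. A \<subseteq> {..<r} \<and> card A = k}"
definition G :: "nat \<Rightarrow> nat \<Rightarrow> nat \<Rightarrow> nat set set" where
  "G r k l = {A. A \<subseteq> {..<r} \<and> card A = k \<and> {..<l} \<subseteq> A}"

lemma ffac_Suc: "ffac m (Suc l) = ffac m l * real_of_int (m - int l)"
  by (simp add: ffac_def)

lemma ffac_fact: "l \<le> k \<Longrightarrow> ffac (int k) l * fact (k-l) = fact k"
proof (induction l)
  case 0 then show ?case by (simp add: ffac_def)
next
  case (Suc l)
  have "k - l = Suc (k - Suc l)" using Suc.prems by auto
  then have f: "fact (k-l) = real (k - l) * fact (k - Suc l)" by (metis fact_Suc of_nat_Suc)
  have r: "real_of_int (int k - int l) = real (k - l)" using Suc.prems by simp
  have "ffac (int k) (Suc l) * fact (k - Suc l) = ffac (int k) l * (real (k - l) * fact (k - Suc l))"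
    using Suc.prems by (simp add: ffac_Suc r of_nat_diff)
  also have "\<dots> = fact k" using f Suc by simp
  finally show ?case .
qed

lemma ffac_zero: "k < l \<Longrightarrow> ffac (int k) l = 0"
  unfolding ffac_def by (rule prod_zero) auto

lemma ffac_nz: "l \<le> r \<Longrightarrow> ffac (int r) l \<noteq> 0"
  unfolding ffac_def by auto

lemma card_C1: "card (C1 r k) = r choose k"
  unfolding C1_def using n_subsets[of "{..<r}" k] by simp

lemma card_G_zero: "k < l \<Longrightarrow> l \<le> r \<Longrightarrow> G r k l = {}"
proof (rule ccontr)
  assume "k < l" "l \<le> r" "G r k l \<noteq> {}"
  then obtain A where A: "A \<subseteq> {..<r}" "card A = k" "{..<l} \<subseteq> A" unfolding G_def by auto
  have "card {..<l} \<le> card A" using A by (intro card_mono) (auto intro: finite_subset)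
  then show False using A \<open>k<l\<close> by simp
qed

lemma card_G: assumes "l \<le> k" "l \<le> r" shows "card (G r k l) = (r - l) choose (k - l)"
proof -
  have "bij_betw (\<lambda>A. A - {..<l}) (G r k l) {B. B \<subseteq> {l..<r} \<and> card B = k - l}"
  proof (rule bij_betw_byWitness[where f' = "\<lambda>B. B \<union> {..<l}"])
    show "\<forall>a\<in>G r k l. (a - {..<l}) \<union> {..<l} = a" unfolding G_def by auto
    show "\<forall>a\<in>{B. B \<subseteq> {l..<r} \<and> card B = k - l}. a \<union> {..<l} - {..<l} = a" by auto
    show "(\<lambda>A. A - {..<l}) ` G r k l \<subseteq> {B. B \<subseteq> {l..<r} \<and> card B = k - l}"
    proof
      fix B assume "B \<in> (\<lambda>A. A - {..<l}) ` G r k l"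
      then obtain A where A: "A \<subseteq> {..<r}" "card A = k" "{..<l} \<subseteq> A" and B: "B = A - {..<l}"
        unfolding G_def by auto
      have "finite A" using A by (auto intro: finite_subset)
      then have "card B = k - l" using A B by (simp add: card_Diff_subset)
      then show "B \<in> {B. B \<subseteq> {l..<r} \<and> card B = k - l}" using A B by auto
    qed
    show "(\<lambda>B. B \<union> {..<l}) ` {B. B \<subseteq> {l..<r} \<and> card B = k - l} \<subseteq> G r k l"
    proof
      fix A assume "A \<in> (\<lambda>B. B \<union> {..<l}) ` {B. B \<subseteq> {l..<r} \<and> card B = k - l}"
      then obtain B where B: "B \<subseteq> {l..<r}" "card B = k - l" and A: "A = B \<union> {..<l}" by auto
      have "finite B" using B by (auto intro: finite_subset)
      moreover have "B \<inter> {..<l} = {}" using B by auto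
      ultimately have "card A = k - l + l" using A B by (simp add: card_Un_disjoint)
      then show "A \<in> G r k l" using A B assms unfolding G_def by auto
    qed
  qed
  then have "card (G r k l) = card {B. B \<subseteq> {l..<r} \<and> card B = k - l}" by (rule bij_betw_same_card)
  also have "\<dots> = (r - l) choose (k - l)" using n_subsets[of "{l..<r}" "k-l"] by simp
  finally show ?thesis .
qed

lemma ratio_G: assumes "k \<le> r" "l \<le> r"
  shows "real (card (G r k l)) / real (card (C1 r k)) = ffac (int k) l / ffac (int r) l"
proof (cases "l \<le> k")
  case False then show ?thesis using card_G_zero[of k l r] assms ffac_zero[of k l] by simp
next
  case True
  have e1: "fact k = ffac (int k) l * fact (k-l)" using ffac_fact[OF True] by simp
  have e2: "fact r = ffac (int r) l * fact (r-l)" using ffac_fact[OF assms(2)] by simp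
  have e3: "r - l - (k - l) = r - k" using True by simp
  have "k - l \<le> r - l" using True assms by simp
  from binomial_fact[OF this] have "real (card (G r k l)) = fact (r-l) / (fact (k-l) * fact (r-k))"
    using card_G[OF True assms(2)] e3 by simp
  moreover have "real (card (C1 r k)) = fact r / (fact k * fact (r-k))"
    using card_C1 binomial_fact[OF assms(1)] by simp
  ultimately show ?thesis using ffac_nz[OF assms(2)] unfolding e1 e2
    by (simp add: field_simps)
qed

definition cls :: "nat \<Rightarrow> nat \<Rightarrow> nat \<Rightarrow> nat \<Rightarrow> ((nat\<Rightarrow>bool)\<times>(nat\<Rightarrow>bool)) set" where
  "cls r1 r2 k1 k2 = {(a,b). (a,b) \<in> configs r1 r2 \<and> card (Collect a) = k1 \<and> card (Collect b) = k2}"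
definition Ev :: "nat \<Rightarrow> nat \<Rightarrow> ((nat\<Rightarrow>bool)\<times>(nat\<Rightarrow>bool)) set" where
  "Ev l1 l2 = {(a, b). (\<forall>j<l1. a j) \<and> (\<forall>j<l2. b j)}"
definition EvS :: "nat set \<Rightarrow> nat set \<Rightarrow> ((nat\<Rightarrow>bool)\<times>(nat\<Rightarrow>bool)) set" where
  "EvS S1 S2 = {(a, b). (\<forall>j\<in>S1. a j) \<and> (\<forall>j\<in>S2. b j)}"
definition hyp :: "nat \<Rightarrow> nat \<Rightarrow> nat \<Rightarrow> nat \<Rightarrow> ((nat\<Rightarrow>bool)\<times>(nat\<Rightarrow>bool)) pmf" where
  "hyp r1 r2 k1 k2 = pmf_of_set (cls r1 r2 k1 k2)"
definition act :: "(nat \<Rightarrow> nat) \<Rightarrow> (nat \<Rightarrow> nat) \<Rightarrow> (nat\<Rightarrow>bool)\<times>(nat\<Rightarrow>bool) \<Rightarrow> (nat\<Rightarrow>bool)\<times>(nat\<Rightarrow>bool)" where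
  "act s1 s2 = (\<lambda>(a, b). (a \<circ> s1, b \<circ> s2))"

lemma cfg_inj: "cfg A B = cfg A' B' \<longleftrightarrow> A = A' \<and> B = B'"
  unfolding cfg_def by (auto simp: fun_eq_iff)

lemma inj_cfg: "inj_on (\<lambda>(A,B). cfg A B) X"
  by (auto simp: inj_on_def cfg_inj)

lemma cfg_Collect: "(a, b) = cfg (Collect a) (Collect b)"
  by (simp add: cfg_def)

lemma configs_eq: "configs n1 n2 = (\<lambda>(A,B). cfg A B) ` (Pow {..<n1} \<times> Pow {..<n2})"
proof
  show "configs n1 n2 \<subseteq> (\<lambda>(A,B). cfg A B) ` (Pow {..<n1} \<times> Pow {..<n2})"
  proof
    fix x assume "x \<in> configs n1 n2"
    then obtain a b where x: "x = (a,b)" "\<forall>j\<ge>n1. \<not> a j" "\<forall>j\<ge>n2. \<not> b j"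
      unfolding configs_def by auto
    then have "Collect a \<subseteq> {..<n1}" "Collect b \<subseteq> {..<n2}" using not_le by auto
    then show "x \<in> (\<lambda>(A,B). cfg A B) ` (Pow {..<n1} \<times> Pow {..<n2})"
      using x(1) cfg_Collect[of a b] by (intro image_eqI[of _ _ "(Collect a, Collect b)"]) auto
  qed
  show "(\<lambda>(A,B). cfg A B) ` (Pow {..<n1} \<times> Pow {..<n2}) \<subseteq> configs n1 n2"
    unfolding configs_def cfg_def by auto
qed

lemma finite_configs: "finite (configs n1 n2)"
  unfolding configs_eq by auto

lemma cls_eq: "cls r1 r2 k1 k2 = (\<lambda>(A,B). cfg A B) ` (C1 r1 k1 \<times> C1 r2 k2)"
proof
  show "cls r1 r2 k1 k2 \<subseteq> (\<lambda>(A,B). cfg A B) ` (C1 r1 k1 \<times> C1 r2 k2)"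
  proof
    fix x assume "x \<in> cls r1 r2 k1 k2"
    then obtain a b where x: "x = (a,b)" "(a,b) \<in> configs r1 r2" "card (Collect a) = k1" "card (Collect b) = k2"
      unfolding cls_def by auto
    then have "Collect a \<subseteq> {..<r1}" "Collect b \<subseteq> {..<r2}" unfolding configs_def using not_le by auto
    then show "x \<in> (\<lambda>(A,B). cfg A B) ` (C1 r1 k1 \<times> C1 r2 k2)"
      using x cfg_Collect[of a b] unfolding C1_def by (intro image_eqI[of _ _ "(Collect a, Collect b)"]) auto
  qed
  show "(\<lambda>(A,B). cfg A B) ` (C1 r1 k1 \<times> C1 r2 k2) \<subseteq> cls r1 r2 k1 k2"
    unfolding cls_def configs_def C1_def cfg_def by auto
qed

lemma cls_Ev: "cls r1 r2 k1 k2 \<inter> Ev l1 l2 = (\<lambda>(A,B). cfg A B) ` (G r1 k1 l1 \<times> G r2 k2 l2)"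
proof -
  have G: "G r k l = {A \<in> C1 r k. {..<l} \<subseteq> A}" for r k l unfolding G_def C1_def by auto
  have E: "cfg A B \<in> Ev l1 l2 \<longleftrightarrow> {..<l1} \<subseteq> A \<and> {..<l2} \<subseteq> B" for A B
    unfolding cfg_def Ev_def by auto
  show ?thesis
  proof
    show "cls r1 r2 k1 k2 \<inter> Ev l1 l2 \<subseteq> (\<lambda>(A,B). cfg A B) ` (G r1 k1 l1 \<times> G r2 k2 l2)"
    proof
      fix x assume x: "x \<in> cls r1 r2 k1 k2 \<inter> Ev l1 l2"
      then obtain A B where AB: "(A,B) \<in> C1 r1 k1 \<times> C1 r2 k2" "x = cfg A B" unfolding cls_eq by auto
      then have "(A,B) \<in> G r1 k1 l1 \<times> G r2 k2 l2" using x E G by auto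
      then show "x \<in> (\<lambda>(A,B). cfg A B) ` (G r1 k1 l1 \<times> G r2 k2 l2)" using AB(2) by force
    qed
    show "(\<lambda>(A,B). cfg A B) ` (G r1 k1 l1 \<times> G r2 k2 l2) \<subseteq> cls r1 r2 k1 k2 \<inter> Ev l1 l2"
      unfolding cls_eq using E G by auto
  qed
qed

lemma cls_sub: "cls r1 r2 k1 k2 \<subseteq> configs r1 r2"
  unfolding cls_def by auto

lemma finite_cls: "finite (cls r1 r2 k1 k2)"
  using finite_subset[OF cls_sub finite_configs] .

lemma cls_ne: "k1 \<le> r1 \<Longrightarrow> k2 \<le> r2 \<Longrightarrow> cls r1 r2 k1 k2 \<noteq> {}"
proof -
  assume "k1 \<le> r1" "k2 \<le> r2"
  then have "({..<k1},{..<k2}) \<in> C1 r1 k1 \<times> C1 r2 k2" by (simp add: C1_def)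
  then show ?thesis unfolding cls_eq by blast
qed

lemma card_cls: "card (cls r1 r2 k1 k2) = card (C1 r1 k1) * card (C1 r2 k2)"
  unfolding cls_eq by (simp add: card_image[OF inj_cfg] card_cartesian_product)

lemma card_cls_Ev: "card (cls r1 r2 k1 k2 \<inter> Ev l1 l2) = card (G r1 k1 l1) * card (G r2 k2 l2)"
  unfolding cls_Ev by (simp add: card_image[OF inj_cfg] card_cartesian_product)

lemma prob_hyp: assumes "k1 \<le> r1" "k2 \<le> r2" "l1 \<le> r1" "l2 \<le> r2"
  shows "measure_pmf.prob (hyp r1 r2 k1 k2) (Ev l1 l2) =
     ffac (int k1) l1 * ffac (int k2) l2 / (ffac (int r1) l1 * ffac (int r2) l2)"
proof -
  have "measure_pmf.prob (hyp r1 r2 k1 k2) (Ev l1 l2) =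
     real (card (G r1 k1 l1) * card (G r2 k2 l2)) / real (card (C1 r1 k1) * card (C1 r2 k2))"
    unfolding hyp_def using cls_ne[OF assms(1,2)] finite_cls
    by (simp add: measure_pmf_of_set card_cls card_cls_Ev)
  also have "\<dots> = (real (card (G r1 k1 l1)) / real (card (C1 r1 k1))) *
      (real (card (G r2 k2 l2)) / real (card (C1 r2 k2)))" by simp
  also have "\<dots> = ffac (int k1) l1 * ffac (int k2) l2 / (ffac (int r1) l1 * ffac (int r2) l2)"
    using ratio_G[OF assms(1,3)] ratio_G[OF assms(2,4)] by simp
  finally show ?thesis .
qed

lemma inj_act: "s1 permutes D1 \<Longrightarrow> s2 permutes D2 \<Longrightarrow> inj (act s1 s2)"
proof (rule injI)
  fix x y assume p: "s1 permutes D1" "s2 permutes D2" and e: "act s1 s2 x = act s1 s2 y"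
  obtain a b a' b' where xy: "x = (a,b)" "y = (a',b')" by (cases x, cases y) auto
  have "a \<circ> s1 \<circ> inv s1 = a' \<circ> s1 \<circ> inv s1" "b \<circ> s2 \<circ> inv s2 = b' \<circ> s2 \<circ> inv s2"
    using e xy by (auto simp: act_def)
  then show "x = y" using xy permutes_inv_o(1)[OF p(1)] permutes_inv_o(1)[OF p(2)]
    by (simp add: o_assoc[symmetric])
qed

lemma card_vimage_perm: "s permutes D \<Longrightarrow> card (s -` A) = card A"
  by (rule card_vimage_inj) (auto dest: permutes_inj permutes_surj)

lemma act_configs: assumes "s1 permutes {..<r1}" "s2 permutes {..<r2}" "x \<in> configs r1 r2"
  shows "act s1 s2 x \<in> configs r1 r2"
  using assms permutes_not_in[OF assms(1)] permutes_not_in[OF assms(2)]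
  unfolding configs_def act_def by auto

lemma act_cls_sub: assumes "s1 permutes {..<r1}" "s2 permutes {..<r2}"
  shows "act s1 s2 ` cls r1 r2 k1 k2 \<subseteq> cls r1 r2 k1 k2"
proof
  fix y assume "y \<in> act s1 s2 ` cls r1 r2 k1 k2"
  then obtain a b where ab: "(a,b) \<in> cls r1 r2 k1 k2" "y = act s1 s2 (a,b)" by auto
  have "card (Collect (a \<circ> s1)) = card (Collect a)"
    using card_vimage_perm[OF assms(1), of "Collect a"] by (simp add: vimage_def o_def)
  moreover have "card (Collect (b \<circ> s2)) = card (Collect b)"
    using card_vimage_perm[OF assms(2), of "Collect b"] by (simp add: vimage_def o_def)
  ultimately show "y \<in> cls r1 r2 k1 k2" using ab act_configs[OF assms, of "(a,b)"]
    unfolding cls_def by (auto simp: act_def)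
qed

lemma act_inv: assumes "s1 permutes D1" "s2 permutes D2"
  shows "act s1 s2 (act (inv s1) (inv s2) x) = x"
  using permutes_inv_o(2)[OF assms(1)] permutes_inv_o(2)[OF assms(2)]
  by (cases x) (simp add: act_def comp_assoc)

lemma act_cls: assumes "s1 permutes {..<r1}" "s2 permutes {..<r2}"
  shows "act s1 s2 ` cls r1 r2 k1 k2 = cls r1 r2 k1 k2"
proof
  show "act s1 s2 ` cls r1 r2 k1 k2 \<subseteq> cls r1 r2 k1 k2" by (rule act_cls_sub[OF assms])
  show "cls r1 r2 k1 k2 \<subseteq> act s1 s2 ` cls r1 r2 k1 k2"
  proof
    fix x assume x: "x \<in> cls r1 r2 k1 k2"
    have "act (inv s1) (inv s2) x \<in> cls r1 r2 k1 k2"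
      using act_cls_sub[OF permutes_inv[OF assms(1)] permutes_inv[OF assms(2)]] x by auto
    then show "x \<in> act s1 s2 ` cls r1 r2 k1 k2"
      using act_inv[OF assms, of x] by (metis image_eqI)
  qed
qed

lemma DFPE_hyp: assumes "k1 \<le> r1" "k2 \<le> r2" shows "DFPE r1 r2 (hyp r1 r2 k1 k2)"
  unfolding DFPE_def
proof (intro conjI allI impI)
  show "set_pmf (hyp r1 r2 k1 k2) \<subseteq> configs r1 r2"
    unfolding hyp_def using cls_ne[OF assms] finite_cls cls_sub by auto
  fix s1 s2 assume p: "s1 permutes {..<r1}" "s2 permutes {..<r2}"
  have "map_pmf (act s1 s2) (hyp r1 r2 k1 k2) = hyp r1 r2 k1 k2"
    unfolding hyp_def using cls_ne[OF assms] finite_cls inj_act[OF p]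
    by (subst map_pmf_of_set_inj) (auto simp: act_cls[OF p] intro: inj_on_subset)
  then show "map_pmf (\<lambda>(a, b). (a \<circ> s1, b \<circ> s2)) (hyp r1 r2 k1 k2) = hyp r1 r2 k1 k2"
    by (simp add: act_def)
qed

lemma conf_sub: "(a,b) \<in> configs n1 n2 \<Longrightarrow> Collect a \<subseteq> {..<n1} \<and> Collect b \<subseteq> {..<n2}"
  unfolding configs_def by (auto, (meson not_le)+)

lemma perm_exists: assumes "finite D" "A \<subseteq> D" "B \<subseteq> D" "card A = card B"
  shows "\<exists>s. s permutes D \<and> s ` A = B"
proof -
  have fA: "finite A" "finite B" using assms finite_subset by auto
  obtain f where f: "bij_betw f A B" using finite_same_card_bij[OF fA assms(4)] by blast
  have "card (D - A) = card (D - B)" using assms fA by (simp add: card_Diff_subset)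
  then obtain g where g: "bij_betw g (D - A) (D - B)"
    using finite_same_card_bij[of "D - A" "D - B"] assms by auto
  define s where "s x = (if x \<in> A then f x else if x \<in> D then g x else x)" for x
  have s1: "bij_betw s A B" using f by (rule bij_betw_cong[THEN iffD1, rotated]) (simp add: s_def)
  have s2: "bij_betw s (D - A) (D - B)" using g by (rule bij_betw_cong[THEN iffD1, rotated]) (simp add: s_def)
  have "bij_betw s (A \<union> (D - A)) (B \<union> (D - B))" by (rule bij_betw_combine[OF s1 s2]) auto
  then have "bij_betw s D D" using assms by (simp add: Un_absorb1 Un_Diff_cancel)
  then have "s permutes D" by (rule bij_imp_permutes) (use assms in \<open>auto simp: s_def\<close>)
  moreover have "s ` A = B" using s1 by (simp add: bij_betw_def)
  ultimately show ?thesis by blast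
qed

lemma wcoord_Ev: "wcoord p l1 l2 = measure_pmf.prob p (Ev l1 l2)"
  unfolding wcoord_def Ev_def by simp

lemma DFPE_act: "DFPE n1 n2 p \<Longrightarrow> s1 permutes {..<n1} \<Longrightarrow> s2 permutes {..<n2} \<Longrightarrow> map_pmf (act s1 s2) p = p"
  unfolding DFPE_def act_def by blast

lemma DFPE_EvS: assumes "DFPE n1 n2 p" "S1 \<subseteq> {..<n1}" "S2 \<subseteq> {..<n2}"
  shows "measure_pmf.prob p (EvS S1 S2) = wcoord p (card S1) (card S2)"
proof -
  have c1: "card S1 \<le> n1" "card S2 \<le> n2" using card_mono[OF _ assms(2)] card_mono[OF _ assms(3)] by auto
  obtain s1 where s1: "s1 permutes {..<n1}" "s1 ` {..<card S1} = S1"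
    using perm_exists[of "{..<n1}" "{..<card S1}" S1] assms c1 by auto
  obtain s2 where s2: "s2 permutes {..<n2}" "s2 ` {..<card S2} = S2"
    using perm_exists[of "{..<n2}" "{..<card S2}" S2] assms c1 by auto
  have i1: "(\<forall>x\<in>S1. a x) \<longleftrightarrow> (\<forall>j<card S1. a (s1 j))" for a :: "nat \<Rightarrow> bool"
  proof -
    have "(\<forall>x\<in>s1 ` {..<card S1}. a x) \<longleftrightarrow> (\<forall>j\<in>{..<card S1}. a (s1 j))" by blast
    then show ?thesis using s1(2) by auto
  qed
  have i2: "(\<forall>x\<in>S2. a x) \<longleftrightarrow> (\<forall>j<card S2. a (s2 j))" for a :: "nat \<Rightarrow> bool"
  proof -
    have "(\<forall>x\<in>s2 ` {..<card S2}. a x) \<longleftrightarrow> (\<forall>j\<in>{..<card S2}. a (s2 j))" by blast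
    then show ?thesis using s2(2) by auto
  qed
  have "act s1 s2 -` Ev (card S1) (card S2) = EvS S1 S2"
    unfolding Ev_def EvS_def act_def using i1 i2 by auto
  then have "wcoord p (card S1) (card S2) = measure_pmf.prob (map_pmf (act s1 s2) p) (Ev (card S1) (card S2))"
    using DFPE_act[OF assms(1) s1(1) s2(1)] wcoord_Ev by simp
  also have "\<dots> = measure_pmf.prob p (EvS S1 S2)"
    using \<open>act s1 s2 -` Ev (card S1) (card S2) = EvS S1 S2\<close> by (simp add: measure_map_pmf)
  finally show ?thesis by simp
qed

lemma prob_sum_configs: assumes "set_pmf q \<subseteq> configs n1 n2"
  shows "measure_pmf.prob q E = sum (pmf q) (E \<inter> configs n1 n2)"
proof -
  have "measure_pmf.prob q E = measure_pmf.prob q (E \<inter> set_pmf q)" by (simp add: measure_Int_set_pmf)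
  also have "E \<inter> set_pmf q = (E \<inter> configs n1 n2) \<inter> set_pmf q" using assms by auto
  also have "measure_pmf.prob q \<dots> = measure_pmf.prob q (E \<inter> configs n1 n2)" by (simp add: measure_Int_set_pmf)
  also have "\<dots> = sum (pmf q) (E \<inter> configs n1 n2)" using finite_configs by (simp add: measure_measure_pmf_finite)
  finally show ?thesis .
qed

lemma uniqueness: assumes "set_pmf p \<subseteq> configs n1 n2" "set_pmf p' \<subseteq> configs n1 n2"
  and eq: "\<And>S1 S2. S1 \<subseteq> {..<n1} \<Longrightarrow> S2 \<subseteq> {..<n2} \<Longrightarrow>
      measure_pmf.prob p (EvS S1 S2) = measure_pmf.prob p' (EvS S1 S2)"
  shows "p = p'"
proof -
  define d where "d x = (n1 - card (Collect (fst x))) + (n2 - card (Collect (snd x)))" for x :: "(nat\<Rightarrow>bool)\<times>(nat\<Rightarrow>bool)"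
  have main: "x \<in> configs n1 n2 \<longrightarrow> pmf p x = pmf p' x" for x
  proof (induction x rule: measure_induct_rule[of d])
    case (less x)
    show ?case
    proof
      assume xc: "x \<in> configs n1 n2"
      obtain a b where x: "x = (a,b)" by (cases x)
      define A where "A = Collect a"
      define B where "B = Collect b"
      have AB: "A \<subseteq> {..<n1}" "B \<subseteq> {..<n2}" using xc unfolding x A_def B_def configs_def
        using not_le by auto
      define R where "R = (EvS A B \<inter> configs n1 n2) - {x}"
      have xE: "x \<in> EvS A B \<inter> configs n1 n2" using xc unfolding x A_def B_def EvS_def by auto
      then have ins: "EvS A B \<inter> configs n1 n2 = insert x R" unfolding R_def by auto
      have fR: "finite R" unfolding R_def using finite_configs by auto
      have xR: "x \<notin> R" unfolding R_def by auto
      have Rd: "pmf p y = pmf p' y" if y: "y \<in> R" for y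
      proof -
        obtain a' b' where y': "y = (a',b')" by (cases y)
        have yc: "y \<in> configs n1 n2" "y \<in> EvS A B" "y \<noteq> x" using y unfolding R_def by auto
        have sub: "A \<subseteq> Collect a'" "B \<subseteq> Collect b'" using yc(2) y' unfolding EvS_def A_def B_def by auto
        have ysub: "Collect a' \<subseteq> {..<n1}" "Collect b' \<subseteq> {..<n2}" using yc(1) y' unfolding configs_def
          using not_le by auto
        have ne: "A \<noteq> Collect a' \<or> B \<noteq> Collect b'" using yc(3) y' x A_def B_def by auto
        have fin: "finite (Collect a')" "finite (Collect b')" using ysub finite_subset by auto
        have m1: "card A \<le> card (Collect a')" "card B \<le> card (Collect b')"
          using card_mono[OF fin(1) sub(1)] card_mono[OF fin(2) sub(2)] .
        have m2: "card (Collect a') \<le> n1" "card (Collect b') \<le> n2"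
          using card_mono[OF _ ysub(1)] card_mono[OF _ ysub(2)] by auto
        have "card A < card (Collect a') \<or> card B < card (Collect b')"
          using ne psubset_card_mono[OF fin(1)] psubset_card_mono[OF fin(2)] sub by auto
        then have "d y < d x" unfolding d_def using x y' A_def B_def m1 m2 by auto
        then show ?thesis using less yc(1) by blast
      qed
      have "measure_pmf.prob p (EvS A B) = pmf p x + sum (pmf p) R"
        using prob_sum_configs[OF assms(1)] ins fR xR by simp
      moreover have "measure_pmf.prob p' (EvS A B) = pmf p' x + sum (pmf p') R"
        using prob_sum_configs[OF assms(2)] ins fR xR by simp
      moreover have "sum (pmf p) R = sum (pmf p') R" using Rd by (rule sum.cong[OF refl])
      ultimately show "pmf p x = pmf p' x" using eq[OF AB] by simp
    qed
  qed
  show ?thesis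
  proof (rule pmf_eqI)
    fix x show "pmf p x = pmf p' x"
    proof (cases "x \<in> configs n1 n2")
      case True then show ?thesis using main by blast
    next
      case False
      then have "x \<notin> set_pmf p" "x \<notin> set_pmf p'" using assms by auto
      then show ?thesis by (simp add: set_pmf_eq)
    qed
  qed
qed

lemma DFPE_counts: assumes "DFPE r1 r2 q" "x \<in> configs r1 r2" "y \<in> configs r1 r2"
  "card (Collect (fst x)) = card (Collect (fst y))" "card (Collect (snd x)) = card (Collect (snd y))"
  shows "pmf q x = pmf q y"
proof -
  obtain a b a' b' where xy: "x = (a,b)" "y = (a',b')" by (cases x, cases y)
  have sub: "Collect a \<subseteq> {..<r1}" "Collect b \<subseteq> {..<r2}" "Collect a' \<subseteq> {..<r1}" "Collect b' \<subseteq> {..<r2}"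
    using assms(2,3) xy conf_sub by auto
  obtain s1 where s1: "s1 permutes {..<r1}" "s1 ` Collect a' = Collect a"
    using perm_exists[of "{..<r1}" "Collect a'" "Collect a"] sub assms(4) xy by auto
  obtain s2 where s2: "s2 permutes {..<r2}" "s2 ` Collect b' = Collect b"
    using perm_exists[of "{..<r2}" "Collect b'" "Collect b"] sub assms(5) xy by auto
  have "a \<circ> s1 = a'"
  proof
    fix j have "a (s1 j) \<longleftrightarrow> s1 j \<in> s1 ` Collect a'" using s1(2) by simp
    also have "\<dots> \<longleftrightarrow> a' j" using permutes_inj[OF s1(1)] by (auto dest: injD)
    finally show "(a \<circ> s1) j = a' j" by simp
  qed
  moreover have "b \<circ> s2 = b'"
  proof
    fix j have "b (s2 j) \<longleftrightarrow> s2 j \<in> s2 ` Collect b'" using s2(2) by simp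
    also have "\<dots> \<longleftrightarrow> b' j" using permutes_inj[OF s2(1)] by (auto dest: injD)
    finally show "(b \<circ> s2) j = b' j" by simp
  qed
  ultimately have "act s1 s2 x = y" using xy by (simp add: act_def)
  then have "pmf q y = pmf (map_pmf (act s1 s2) q) (act s1 s2 x)"
    using DFPE_act[OF assms(1) s1(1) s2(1)] by simp
  also have "\<dots> = pmf q x" by (rule pmf_map_inj'[OF inj_act[OF s1(1) s2(1)]])
  finally show ?thesis by simp
qed

lemma sum_apply_fun: "(\<Sum>k\<in>K. f k) x = (\<Sum>k\<in>K. (f k) x)"
  by (induction K rule: infinite_finite_induct) auto

lemma scaleR_apply_fun: "(c *\<^sub>R f) x = c * f x"
  by (simp add: scaleR_fun_def)

lemma configs_Union: "configs r1 r2 = (\<Union>k\<in>{..r1}\<times>{..r2}. cls r1 r2 (fst k) (snd k))"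
proof
  show "configs r1 r2 \<subseteq> (\<Union>k\<in>{..r1}\<times>{..r2}. cls r1 r2 (fst k) (snd k))"
  proof
    fix x assume x: "x \<in> configs r1 r2"
    obtain a b where ab: "x = (a,b)" by (cases x)
    have s: "Collect a \<subseteq> {..<r1}" "Collect b \<subseteq> {..<r2}" using conf_sub x ab by auto
    have "card (Collect a) \<le> r1" "card (Collect b) \<le> r2"
      using card_mono[OF _ s(1)] card_mono[OF _ s(2)] by auto
    then have "(card (Collect a), card (Collect b)) \<in> {..r1}\<times>{..r2}" by auto
    moreover have "x \<in> cls r1 r2 (card (Collect a)) (card (Collect b))" using x ab unfolding cls_def by auto
    ultimately show "x \<in> (\<Union>k\<in>{..r1}\<times>{..r2}. cls r1 r2 (fst k) (snd k))" by force
  qed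
  show "(\<Union>k\<in>{..r1}\<times>{..r2}. cls r1 r2 (fst k) (snd k)) \<subseteq> configs r1 r2" using cls_sub by blast
qed

lemma decomp: assumes "DFPE r1 r2 q"
  shows "measure_pmf.prob q E = (\<Sum>k\<in>{..r1}\<times>{..r2}.
     measure_pmf.prob q (cls r1 r2 (fst k) (snd k)) * measure_pmf.prob (hyp r1 r2 (fst k) (snd k)) E)"
proof -
  let ?K = "{..r1}\<times>{..r2}"
  have sq: "set_pmf q \<subseteq> configs r1 r2" using assms unfolding DFPE_def by auto
  have "E \<inter> configs r1 r2 = (\<Union>k\<in>?K. E \<inter> cls r1 r2 (fst k) (snd k))"
    using configs_Union by blast
  then have "measure_pmf.prob q E = sum (pmf q) (\<Union>k\<in>?K. E \<inter> cls r1 r2 (fst k) (snd k))"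
    unfolding prob_sum_configs[OF sq] by simp
  also have "\<dots> = (\<Sum>k\<in>?K. sum (pmf q) (E \<inter> cls r1 r2 (fst k) (snd k)))"
    by (rule sum.UNION_disjoint) (auto simp: finite_cls cls_def intro: finite_subset[OF _ finite_configs])
  also have "\<dots> = (\<Sum>k\<in>?K. measure_pmf.prob q (cls r1 r2 (fst k) (snd k)) * measure_pmf.prob (hyp r1 r2 (fst k) (snd k)) E)"
  proof (rule sum.cong[OF refl])
    fix k assume k: "k \<in> ?K"
    obtain k1 k2 where kk: "k = (k1,k2)" by (cases k)
    have kr: "k1 \<le> r1" "k2 \<le> r2" using k kk by auto
    let ?C = "cls r1 r2 k1 k2"
    obtain x0 where x0: "x0 \<in> ?C" using cls_ne[OF kr] by auto
    have c: "pmf q x = pmf q x0" if "x \<in> ?C" for x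
      using that x0 DFPE_counts[OF assms, of x x0] cls_sub unfolding cls_def by (auto simp: case_prod_beta)
    have "sum (pmf q) (E \<inter> ?C) = real (card (?C \<inter> E)) * pmf q x0"
      using c by (simp add: Int_commute)
    moreover have "measure_pmf.prob q ?C = real (card ?C) * pmf q x0"
      using c finite_cls by (simp add: measure_measure_pmf_finite)
    moreover have "measure_pmf.prob (hyp r1 r2 k1 k2) E = real (card (?C \<inter> E)) / real (card ?C)"
      unfolding hyp_def using cls_ne[OF kr] finite_cls by (simp add: measure_pmf_of_set)
    moreover have "card ?C \<noteq> 0" using cls_ne[OF kr] finite_cls by auto
    ultimately show "sum (pmf q) (E \<inter> cls r1 r2 (fst k) (snd k)) =
       measure_pmf.prob q (cls r1 r2 (fst k) (snd k)) * measure_pmf.prob (hyp r1 r2 (fst k) (snd k)) E"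
      using kk by simp
  qed
  finally show ?thesis .
qed

lemma restr_configs: "restr n1 n2 x \<in> configs n1 n2"
  unfolding restr_def configs_def by (cases x) auto

lemma restr_Ev: "l1 \<le> n1 \<Longrightarrow> l2 \<le> n2 \<Longrightarrow> restr n1 n2 -` Ev l1 l2 = Ev l1 l2"
  unfolding restr_def Ev_def by auto

lemma DFPE_restr: assumes "n1 \<le> r1" "n2 \<le> r2" "DFPE r1 r2 q"
  shows "DFPE n1 n2 (map_pmf (restr n1 n2) q)"
  unfolding DFPE_def
proof (intro conjI allI impI)
  show "set_pmf (map_pmf (restr n1 n2) q) \<subseteq> configs n1 n2" using restr_configs by auto
  fix s1 s2 assume p: "s1 permutes {..<n1}" "s2 permutes {..<n2}"
  have p': "s1 permutes {..<r1}" "s2 permutes {..<r2}"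
    using permutes_subset[OF p(1)] permutes_subset[OF p(2)] assms by auto
  have comm: "act s1 s2 \<circ> restr n1 n2 = restr n1 n2 \<circ> act s1 s2"
  proof
    fix x :: "(nat\<Rightarrow>bool)\<times>(nat\<Rightarrow>bool)"
    obtain a b where x: "x = (a,b)" by (cases x)
    have "(s1 j < n1) = (j < n1)" for j using permutes_in_image[OF p(1), of j] by simp
    moreover have "(s2 j < n2) = (j < n2)" for j using permutes_in_image[OF p(2), of j] by simp
    ultimately show "(act s1 s2 \<circ> restr n1 n2) x = (restr n1 n2 \<circ> act s1 s2) x"
      unfolding x by (simp add: act_def restr_def o_def)
  qed
  have "map_pmf (act s1 s2) (map_pmf (restr n1 n2) q) = map_pmf (restr n1 n2) (map_pmf (act s1 s2) q)"
    by (simp add: pmf.map_comp comm)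
  also have "\<dots> = map_pmf (restr n1 n2) q" using DFPE_act[OF assms(3) p'] by simp
  finally show "map_pmf (\<lambda>(a, b). (a \<circ> s1, b \<circ> s2)) (map_pmf (restr n1 n2) q) = map_pmf (restr n1 n2) q"
    by (simp add: act_def)
qed

lemma lambdapt_hyp: assumes "k1 \<le> r1" "k2 \<le> r2" "n1 \<le> r1" "n2 \<le> r2" "(l1,l2) \<in> idx n1 n2"
  shows "lambdapt n1 n2 k1 k2 r1 r2 (l1,l2) = measure_pmf.prob (hyp r1 r2 k1 k2) (Ev l1 l2)"
  using assms prob_hyp[OF assms(1,2), of l1 l2] unfolding lambdapt_def idx_def by auto

theorem mainTheorem4:
  fixes n1 n2 r1 r2 :: nat
    and p :: "((nat \<Rightarrow> bool) \<times> (nat \<Rightarrow> bool)) pmf"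
  assumes "n1 \<le> r1" and "n2 \<le> r2"
    and "DFPE n1 n2 p"
  shows "extendible n1 n2 r1 r2 p \<longleftrightarrow>
    wpoint n1 n2 p \<in> convex hull {lambdapt n1 n2 k1 k2 r1 r2 | k1 k2. k1 \<le> r1 \<and> k2 \<le> r2}"
proof -
  let ?K = "{..r1}\<times>{..r2}"
  define L where "L k = lambdapt n1 n2 (fst k) (snd k) r1 r2" for k
  have SL: "{lambdapt n1 n2 k1 k2 r1 r2 | k1 k2. k1 \<le> r1 \<and> k2 \<le> r2} = L ` ?K"
    unfolding L_def by force
  show ?thesis unfolding SL
  proof
    assume "extendible n1 n2 r1 r2 p"
    then obtain q where q: "DFPE r1 r2 q" "map_pmf (restr n1 n2) q = p" unfolding extendible_def by auto
    define P where "P k = measure_pmf.prob q (cls r1 r2 (fst k) (snd k))" for k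
    have wp: "wpoint n1 n2 p = (\<Sum>k\<in>?K. P k *\<^sub>R L k)"
    proof
      fix l :: "nat \<times> nat"
      obtain l1 l2 where l: "l = (l1,l2)" by (cases l)
      show "wpoint n1 n2 p l = (\<Sum>k\<in>?K. P k *\<^sub>R L k) l"
      proof (cases "(l1,l2) \<in> idx n1 n2")
        case True
        then have le: "l1 \<le> n1" "l2 \<le> n2" unfolding idx_def by auto
        have "wpoint n1 n2 p l = wcoord p l1 l2" using True l by (simp add: wpoint_def)
        also have "\<dots> = measure_pmf.prob q (Ev l1 l2)"
          using q(2) restr_Ev[OF le] by (auto simp: wcoord_Ev measure_map_pmf)
        also have "\<dots> = (\<Sum>k\<in>?K. P k * measure_pmf.prob (hyp r1 r2 (fst k) (snd k)) (Ev l1 l2))"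
          unfolding P_def by (rule decomp[OF q(1)])
        also have "\<dots> = (\<Sum>k\<in>?K. P k * L k (l1,l2))"
          using lambdapt_hyp[OF _ _ assms(1,2) True] unfolding L_def by (intro sum.cong) auto
        also have "\<dots> = (\<Sum>k\<in>?K. P k *\<^sub>R L k) l" using l by (simp add: sum_apply_fun scaleR_apply_fun)
        finally show ?thesis .
      next
        case False
        then show ?thesis using l by (simp add: wpoint_def L_def lambdapt_def sum_apply_fun scaleR_apply_fun)
      qed
    qed
    have "1 = measure_pmf.prob q UNIV" by simp
    also have "\<dots> = (\<Sum>k\<in>?K. P k * measure_pmf.prob (hyp r1 r2 (fst k) (snd k)) UNIV)"
      unfolding P_def by (rule decomp[OF q(1)])
    finally have Psum: "(\<Sum>k\<in>?K. P k) = 1" by simp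
    have "(\<Sum>k\<in>?K. P k *\<^sub>R L k) \<in> convex hull (L ` ?K)"
      by (rule convex_sum) (auto simp: Psum intro: hull_inc, simp add: P_def)
    then show "wpoint n1 n2 p \<in> convex hull (L ` ?K)" using wp by simp
  next
    assume hull: "wpoint n1 n2 p \<in> convex hull (L ` ?K)"
    define S where "S = L ` ?K"
    have fS: "finite S" unfolding S_def by auto
    have "wpoint n1 n2 p \<in> convex hull S" using hull S_def by simp
    then have "\<exists>u. (\<forall>x\<in>S. 0 \<le> u x) \<and> sum u S = 1 \<and> (\<Sum>x\<in>S. u x *\<^sub>R x) = wpoint n1 n2 p"
      unfolding convex_hull_finite[OF fS] by simp
    then obtain u where u: "\<forall>x\<in>S. 0 \<le> u x" "sum u S = 1" "(\<Sum>x\<in>S. u x *\<^sub>R x) = wpoint n1 n2 p"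
      by blast
    define \<kappa> where "\<kappa> x = (SOME k. k \<in> ?K \<and> L k = x)" for x
    have \<kappa>: "\<kappa> x \<in> ?K \<and> L (\<kappa> x) = x" if "x \<in> S" for x
    proof -
      have "\<exists>k. k \<in> ?K \<and> L k = x" using that unfolding S_def by auto
      then show ?thesis unfolding \<kappa>_def by (rule someI_ex)
    qed
    define f where "f x = (if x \<in> S then u x else 0)" for x
    have fnn: "\<And>x. 0 \<le> f x" using u(1) unfolding f_def by auto
    have fsum: "(\<integral>\<^sup>+x. ennreal (f x) \<partial>count_space UNIV) = 1"
    proof -
      have "(\<integral>\<^sup>+x. ennreal (f x) \<partial>count_space UNIV) = (\<Sum>x\<in>S. ennreal (f x))"
        by (rule nn_integral_count_space'[OF fS]) (auto simp: f_def)
      also have "\<dots> = ennreal (sum f S)" using fnn by simp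
      also have "sum f S = 1" using u(2) unfolding f_def by simp
      finally show ?thesis by simp
    qed
    define \<mu> where "\<mu> = embed_pmf f"
    have p\<mu>: "pmf \<mu> x = f x" for x unfolding \<mu>_def by (rule pmf_embed_pmf[OF fnn fsum])
    have s\<mu>: "set_pmf \<mu> \<subseteq> S" using p\<mu> unfolding set_pmf_eq f_def by auto
    define h where "h x = hyp r1 r2 (fst (\<kappa> x)) (snd (\<kappa> x))" for x
    have hD: "DFPE r1 r2 (h x)" if "x \<in> S" for x
      unfolding h_def using \<kappa>[OF that] by (intro DFPE_hyp) auto
    have hs: "set_pmf (h x) \<subseteq> configs r1 r2" if "x \<in> S" for x
      using hD[OF that] unfolding DFPE_def by auto
    define q where "q = bind_pmf \<mu> h"
    have sq: "set_pmf q \<subseteq> configs r1 r2" unfolding q_def using s\<mu> hs by auto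
    have qD: "DFPE r1 r2 q"
      unfolding DFPE_def
    proof (intro conjI allI impI sq)
      fix s1 s2 assume p: "s1 permutes {..<r1}" "s2 permutes {..<r2}"
      have "map_pmf (act s1 s2) q = bind_pmf \<mu> (\<lambda>x. map_pmf (act s1 s2) (h x))"
        unfolding q_def by (rule map_bind_pmf)
      also have "\<dots> = bind_pmf \<mu> h"
        using DFPE_act[OF hD p(1) p(2)] s\<mu> by (intro bind_pmf_cong) auto
      finally show "map_pmf (\<lambda>(a, b). (a \<circ> s1, b \<circ> s2)) q = q" unfolding q_def by (simp add: act_def)
    qed
    have probq: "measure_pmf.prob q E = (\<Sum>x\<in>S. u x * measure_pmf.prob (h x) E)" for E
    proof -
      have pq: "pmf q y = (\<Sum>x\<in>S. u x * pmf (h x) y)" for y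
      proof -
        have "pmf q y = (\<integral>x. pmf (h x) y \<partial>measure_pmf \<mu>)" unfolding q_def by (rule pmf_bind)
        also have "\<dots> = (\<Sum>x\<in>S. pmf (h x) y * pmf \<mu> x)"
          by (rule integral_measure_pmf_real[OF fS]) (use s\<mu> in auto)
        also have "\<dots> = (\<Sum>x\<in>S. u x * pmf (h x) y)" by (simp add: p\<mu> f_def mult.commute)
        finally show ?thesis .
      qed
      have "measure_pmf.prob q E = (\<Sum>y\<in>E \<inter> configs r1 r2. \<Sum>x\<in>S. u x * pmf (h x) y)"
        using prob_sum_configs[OF sq] pq by simp
      also have "\<dots> = (\<Sum>x\<in>S. u x * sum (pmf (h x)) (E \<inter> configs r1 r2))"
        by (subst sum.swap) (simp add: sum_distrib_left)
      also have "\<dots> = (\<Sum>x\<in>S. u x * measure_pmf.prob (h x) E)"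
        using prob_sum_configs[OF hs] by (intro sum.cong) auto
      finally show ?thesis .
    qed
    define p' where "p' = map_pmf (restr n1 n2) q"
    have p'D: "DFPE n1 n2 p'" unfolding p'_def by (rule DFPE_restr[OF assms(1,2) qD])
    have weq: "wcoord p l1 l2 = wcoord p' l1 l2" if le: "l1 \<le> n1" "l2 \<le> n2" for l1 l2
    proof (cases "(l1,l2) \<in> idx n1 n2")
      case False
      then have "l1 = 0" "l2 = 0" using le unfolding idx_def by auto
      then have "Ev l1 l2 = UNIV" unfolding Ev_def by auto
      then show ?thesis by (simp add: wcoord_Ev)
    next
      case True
      have "wcoord p l1 l2 = wpoint n1 n2 p (l1,l2)" using True by (simp add: wpoint_def)
      also have "\<dots> = (\<Sum>x\<in>S. u x * x (l1,l2))" using u(3)[symmetric]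
        by (simp add: sum_apply_fun scaleR_apply_fun)
      also have "\<dots> = (\<Sum>x\<in>S. u x * measure_pmf.prob (h x) (Ev l1 l2))"
      proof (intro sum.cong refl)
        fix x assume x: "x \<in> S"
        have "x (l1,l2) = L (\<kappa> x) (l1,l2)" using \<kappa>[OF x] by simp
        also have "\<dots> = measure_pmf.prob (h x) (Ev l1 l2)"
          unfolding L_def h_def using \<kappa>[OF x] by (intro lambdapt_hyp[OF _ _ assms(1,2) True]) auto
        finally show "u x * x (l1,l2) = u x * measure_pmf.prob (h x) (Ev l1 l2)" by simp
      qed
      also have "\<dots> = measure_pmf.prob q (Ev l1 l2)" using probq by simp
      also have "\<dots> = wcoord p' l1 l2"
        unfolding p'_def using restr_Ev[OF le] by (simp add: wcoord_Ev measure_map_pmf)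
      finally show ?thesis .
    qed
    have "p = p'"
    proof (rule uniqueness)
      show "set_pmf p \<subseteq> configs n1 n2" using assms(3) unfolding DFPE_def by auto
      show "set_pmf p' \<subseteq> configs n1 n2" using p'D unfolding DFPE_def by auto
      fix S1 S2 assume ss: "S1 \<subseteq> {..<n1}" "S2 \<subseteq> {..<n2}"
      have "card S1 \<le> n1" "card S2 \<le> n2" using card_mono[OF _ ss(1)] card_mono[OF _ ss(2)] by auto
      then show "measure_pmf.prob p (EvS S1 S2) = measure_pmf.prob p' (EvS S1 S2)"
        using DFPE_EvS[OF assms(3) ss] DFPE_EvS[OF p'D ss] weq by simp
    qed
    then show "extendible n1 n2 r1 r2 p" unfolding extendible_def p'_def using qD by auto
  qed
qed

end
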